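(* Let $A=aH-\sum_{i=1}^{10}b_iE_i\in H_2(\mathbb{CP}^2\#10\overline{\mathbb{CP}^2};\mathbb Z)$ be a reduced class with $A\cdot A=-4$, $K_{st}\cdot A=2$ and $b_{10}=2$. Then $A=-a'(-3H+\sum_{i=1}^9E_i)-2E_{10}$ for some integer $a'\ge2$.
   Context: $\{H,E_1,\dots,E_{10}\}$ is the standard basis ($H^2=1$, $E_i^2=-1$, pairwise orthogonal), $K_{st}=-3H+\sum_{i=1}^{10}E_i$. A class $aH-\sum b_iE_i$ is reduced if $b_1\ge\cdots\ge b_{10}\ge0$ and $a\ge b_1+b_2+b_3$. *)

theory Defs
  imports Main
begin

text \<open>A class a H - sum_{i=1}^{10} b_i E_i in H_2(CP^2 # 10 (-CP^2); Z) is represented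
  by the pair (a, b) with b :: nat => int; only the values b 1, ..., b 10 matter.\<close>

type_synonym hclass = "int \<times> (nat \<Rightarrow> int)"

definition mkclass :: "int \<Rightarrow> (nat \<Rightarrow> int) \<Rightarrow> hclass" where
  "mkclass a b = (a, (\<lambda>i. if i \<in> {1..10} then b i else 0))"

definition cdot :: "hclass \<Rightarrow> hclass \<Rightarrow> int" where
  "cdot A B = fst A * fst B - (\<Sum>i=1..10. snd A i * snd B i)"

definition Kst :: hclass where
  "Kst = mkclass (-3) (\<lambda>_. -1)"

definition reduced :: "hclass \<Rightarrow> bool" where
  "reduced A = ((\<forall>i\<in>{1..9}. snd A i \<ge> snd A (Suc i)) \<and> snd A 10 \<ge> 0
     \<and> fst A \<ge> snd A 1 + snd A 2 + snd A 3)"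

end

theory Submission
  imports Defs
begin

lemma sum10: "(\<Sum>i=1..10::nat. f i) = f 1 + f 2 + f 3 + f 4 + f 5 + f 6 + f 7 + f 8 + f 9 + (f 10::int)"
  by (simp add: eval_nat_numeral sum.atLeast_Suc_atMost numeral_eq_Suc)

theorem lemma5p7:
  fixes a :: int and b :: "nat \<Rightarrow> int"
  defines "A \<equiv> mkclass a b"
  assumes "reduced A"
    and "cdot A A = -4"
    and "cdot Kst A = 2"
    and "b 10 = 2"
  shows "\<exists>a'::int. a' \<ge> 2 \<and>
    A = mkclass (3 * a') (\<lambda>i. if i \<le> 9 then a' else 2)"
proof -
  have r: "b 1 \<ge> b 2" "b 2 \<ge> b 3" "b 3 \<ge> b 4" "b 4 \<ge> b 5" "b 5 \<ge> b 6" "b 6 \<ge> b 7"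
     "b 7 \<ge> b 8" "b 8 \<ge> b 9" "b 9 \<ge> b 10"
    using assms(2) unfolding reduced_def A_def mkclass_def by (auto simp: numeral_eq_Suc)
  have q: "a*a - (b 1*b 1 + b 2*b 2 + b 3*b 3 + b 4*b 4 + b 5*b 5 + b 6*b 6 + b 7*b 7 + b 8*b 8 + b 9*b 9 + b 10*b 10) = -4"
    using assms(3) unfolding cdot_def A_def mkclass_def sum10 by simp
  have l: "-3*a - (-(b 1) - b 2 - b 3 - b 4 - b 5 - b 6 - b 7 - b 8 - b 9 - b 10) = 2"
    using assms(4) unfolding cdot_def Kst_def A_def mkclass_def sum10 by simp
  define S where "S = (3*b 1 - a)^2 + (3*b 2 - a)^2 + (3*b 3 - a)^2 + (3*b 4 - a)^2 + (3*b 5 - a)^2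
     + (3*b 6 - a)^2 + (3*b 7 - a)^2 + (3*b 8 - a)^2 + (3*b 9 - a)^2"
  have S2: "S = 9*(b 1*b 1 + b 2*b 2 + b 3*b 3 + b 4*b 4 + b 5*b 5 + b 6*b 6 + b 7*b 7 + b 8*b 8 + b 9*b 9)
     - 6*a*(b 1 + b 2 + b 3 + b 4 + b 5 + b 6 + b 7 + b 8 + b 9) + 9*a*a"
    unfolding S_def by (simp add: algebra_simps power2_eq_square)
  have e1: "b 1*b 1 + b 2*b 2 + b 3*b 3 + b 4*b 4 + b 5*b 5 + b 6*b 6 + b 7*b 7 + b 8*b 8 + b 9*b 9 = a*a"
    using q assms(5) by simp
  have e2: "b 1 + b 2 + b 3 + b 4 + b 5 + b 6 + b 7 + b 8 + b 9 = 3*a"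
    using l assms(5) by simp
  have "S = 0" unfolding S2 e1 e2 by (simp add: algebra_simps)
  hence z: "(3*b i - a)^2 = 0" if "i \<in> {1..9}" for i
  proof -
    have "i = 1 \<or> i = 2 \<or> i = 3 \<or> i = 4 \<or> i = 5 \<or> i = 6 \<or> i = 7 \<or> i = 8 \<or> i = 9" using that by auto
    moreover have "\<forall>j\<in>{1,2,3,4,5,6,7,8,9::nat}. (3*b j - a)^2 = 0"
      using \<open>S = 0\<close> unfolding S_def
      by (simp only: ball_simps add_nonneg_eq_0_iff zero_le_power2 add_nonneg_nonneg)
    ultimately show ?thesis by blast
  qed
  have bi: "b i = b 1" if "i \<in> {1..9}" for i
    using z[OF that] z[of 1] by simp
  have a3: "a = 3 * b 1" using z[of 1] by simp
  show ?thesis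
  proof (intro exI conjI)
    show "b 1 \<ge> 2" using r assms(5) by linarith
    show "A = mkclass (3 * b 1) (\<lambda>i. if i \<le> 9 then b 1 else 2)"
    proof -
      have "\<And>i. (if i \<in> {1..10} then b i else 0) = (if i \<in> {1..10} then (if i \<le> 9 then b 1 else 2) else 0)"
      proof -
        fix i :: nat
        show "(if i \<in> {1..10} then b i else 0) = (if i \<in> {1..10} then (if i \<le> 9 then b 1 else 2) else 0)"
          using bi[of i] assms(5) by (cases "i = 10") auto
      qed
      thus ?thesis unfolding A_def mkclass_def a3 by (simp only: prod.inject fun_eq_iff) simp
    qed
  qed
qed

end
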